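(* Let $F_1,F_2\colon\mathbf{A}\to\mathbf{B}$ be lenses, and let $E\colon\mathbf{B}\to\mathbf{C}$ be a lens with $E\circ F_1=E\circ F_2$ such that the get functor $UE$ is a coequaliser of $UF_1$ and $UF_2$ in $\mathbf{Cat}$. Let $G\colon\mathbf{B}\to\mathbf{D}$ be a lens with $G\circ F_1=G\circ F_2$, and let $H\colon\mathbf{C}\to\mathbf{D}$ be the unique functor with $UG=H\circ UE$. Then there is a unique lens structure on $H$ such that $\varphi_{H,EB}(d)=E\,\varphi_{G,B}(d)$ for all objects $B$ of $\mathbf{B}$ and all morphisms $d$ of $\mathbf{D}$ with domain $GB$.
   Context: A lens $F\colon \mathbf{A}\to\mathbf{B}$ between small categories consists of a functor $F\colon\mathbf{A}\to\mathbf{B}$ (the get functor) together with, for each object $A$ of $\mathbf{A}$, a function $\varphi_{F,A}$ from the set of morphisms of $\mathbf{B}$ with domain $FA$ to the set of morphisms of $\mathbf{A}$ with domain $A$, such that: $F(\varphi_{F,A}b)=b$; $\varphi_{F,A}(\mathrm{id}_{FA})=\mathrm{id}_A$; and $\varphi_{F,A}(b'\circ b)=\varphi_{F,A'}(b')\circ\varphi_{F,A}(b)$ whenever $b$ has domain $FA$, $A'$ is the codomain of $\varphi_{F,A}b$, and $b'$ has domain $FA'$. A lens structure on a functor is a choice of such put functions. $\mathbf{Lens}$ is the category of small categories and lenses, with composite of $F\colon\mathbf{A}\to\mathbf{B}$, $G\colon\mathbf{B}\to\mathbf{C}$ having get functor $G\circ F$ and puts $\varphi_{G\circ F,A}(c)=\varphi_{F,A}(\varphi_{G,FA}(c))$.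 $U\colon\mathbf{Lens}\to\mathbf{Cat}$ sends a lens to its get functor. *)

theory Defs
  imports Main
begin

text \<open>Small categories, represented by carriers of objects and arrows together with
domain, codomain, identity and composition (Comp g f = g o f).\<close>

record ('o, 'a) cat =
  Obj  :: "'o set"
  Arr  :: "'a set"
  Dom  :: "'a \<Rightarrow> 'o"
  Cod  :: "'a \<Rightarrow> 'o"
  Idn  :: "'o \<Rightarrow> 'a"
  Comp :: "'a \<Rightarrow> 'a \<Rightarrow> 'a"

definition is_cat :: "('o, 'a) cat \<Rightarrow> bool" where
  "is_cat C \<longleftrightarrow>
     (\<forall>f \<in> Arr C. Dom C f \<in> Obj C \<and> Cod C f \<in> Obj C) \<and>
     (\<forall>x \<in> Obj C. Idn C x \<in> Arr C \<and> Dom C (Idn C x) = x \<and> Cod C (Idn C x) = x) \<and>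
     (\<forall>f \<in> Arr C. \<forall>g \<in> Arr C. Cod C f = Dom C g \<longrightarrow>
        Comp C g f \<in> Arr C \<and> Dom C (Comp C g f) = Dom C f \<and> Cod C (Comp C g f) = Cod C g) \<and>
     (\<forall>f \<in> Arr C. Comp C f (Idn C (Dom C f)) = f \<and> Comp C (Idn C (Cod C f)) f = f) \<and>
     (\<forall>f \<in> Arr C. \<forall>g \<in> Arr C. \<forall>h \<in> Arr C. Cod C f = Dom C g \<longrightarrow> Cod C g = Dom C h \<longrightarrow>
        Comp C h (Comp C g f) = Comp C (Comp C h g) f)"

text \<open>A functor is given by its object map and arrow map (only their values on the
carriers matter).\<close>

definition is_functor ::
  "('o1, 'a1) cat \<Rightarrow> ('o2, 'a2) cat \<Rightarrow> ('o1 \<Rightarrow> 'o2) \<Rightarrow> ('a1 \<Rightarrow> 'a2) \<Rightarrow> bool" where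
  "is_functor A B Fo Fa \<longleftrightarrow>
     (\<forall>x \<in> Obj A. Fo x \<in> Obj B) \<and>
     (\<forall>f \<in> Arr A. Fa f \<in> Arr B \<and> Dom B (Fa f) = Fo (Dom A f) \<and> Cod B (Fa f) = Fo (Cod A f)) \<and>
     (\<forall>x \<in> Obj A. Fa (Idn A x) = Idn B (Fo x)) \<and>
     (\<forall>f \<in> Arr A. \<forall>g \<in> Arr A. Cod A f = Dom A g \<longrightarrow> Fa (Comp A g f) = Comp B (Fa g) (Fa f))"

definition functor_eq ::
  "('o1, 'a1) cat \<Rightarrow> ('o1 \<Rightarrow> 'o2) \<Rightarrow> ('a1 \<Rightarrow> 'a2) \<Rightarrow> ('o1 \<Rightarrow> 'o2) \<Rightarrow> ('a1 \<Rightarrow> 'a2) \<Rightarrow> bool" where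
  "functor_eq A Fo Fa Go Ga \<longleftrightarrow> (\<forall>x \<in> Obj A. Fo x = Go x) \<and> (\<forall>f \<in> Arr A. Fa f = Ga f)"

text \<open>A lens A -> B: a get functor (Fo, Fa) with put functions P, where P x b is
the lift of b (an arrow of B with domain Fo x) at the object x of A.\<close>

definition is_lens ::
  "('o1, 'a1) cat \<Rightarrow> ('o2, 'a2) cat \<Rightarrow> ('o1 \<Rightarrow> 'o2) \<Rightarrow> ('a1 \<Rightarrow> 'a2) \<Rightarrow> ('o1 \<Rightarrow> 'a2 \<Rightarrow> 'a1) \<Rightarrow> bool" where
  "is_lens A B Fo Fa P \<longleftrightarrow>
     is_functor A B Fo Fa \<and>
     (\<forall>x \<in> Obj A. \<forall>b \<in> Arr B. Dom B b = Fo x \<longrightarrow>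
        P x b \<in> Arr A \<and> Dom A (P x b) = x \<and> Fa (P x b) = b) \<and>
     (\<forall>x \<in> Obj A. P x (Idn B (Fo x)) = Idn A x) \<and>
     (\<forall>x \<in> Obj A. \<forall>b \<in> Arr B. \<forall>b' \<in> Arr B.
        Dom B b = Fo x \<longrightarrow> Dom B b' = Fo (Cod A (P x b)) \<longrightarrow>
        P x (Comp B b' b) = Comp A (P (Cod A (P x b)) b') (P x b))"

definition lens_comp_put ::
  "('o1 \<Rightarrow> 'o2) \<Rightarrow> ('o1 \<Rightarrow> 'a2 \<Rightarrow> 'a1) \<Rightarrow> ('o2 \<Rightarrow> 'a3 \<Rightarrow> 'a2) \<Rightarrow> ('o1 \<Rightarrow> 'a3 \<Rightarrow> 'a1)" where
  "lens_comp_put Fo P Q = (\<lambda>x c. P x (Q (Fo x) c))"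

definition lens_eq ::
  "('o1, 'a1) cat \<Rightarrow> ('o2, 'a2) cat \<Rightarrow>
   ('o1 \<Rightarrow> 'o2) \<Rightarrow> ('a1 \<Rightarrow> 'a2) \<Rightarrow> ('o1 \<Rightarrow> 'a2 \<Rightarrow> 'a1) \<Rightarrow>
   ('o1 \<Rightarrow> 'o2) \<Rightarrow> ('a1 \<Rightarrow> 'a2) \<Rightarrow> ('o1 \<Rightarrow> 'a2 \<Rightarrow> 'a1) \<Rightarrow> bool" where
  "lens_eq A B Fo Fa P Go Ga Q \<longleftrightarrow>
     functor_eq A Fo Fa Go Ga \<and>
     (\<forall>x \<in> Obj A. \<forall>b \<in> Arr B. Dom B b = Fo x \<longrightarrow> P x b = Q x b)"

text \<open>(Eo,Ea) : B -> C is a coequaliser in Cat of (F1o,F1a), (F2o,F2a) : A -> B, where the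
universal property is tested against all categories whose objects have type 'x and
whose arrows have type 'y (the type argument T fixes this test universe).\<close>

definition cat_coequaliser ::
  "('x \<times> 'y) itself \<Rightarrow> ('o1, 'a1) cat \<Rightarrow> ('o2, 'a2) cat \<Rightarrow> ('o3, 'a3) cat \<Rightarrow>
   ('o1 \<Rightarrow> 'o2) \<Rightarrow> ('a1 \<Rightarrow> 'a2) \<Rightarrow> ('o1 \<Rightarrow> 'o2) \<Rightarrow> ('a1 \<Rightarrow> 'a2) \<Rightarrow>
   ('o2 \<Rightarrow> 'o3) \<Rightarrow> ('a2 \<Rightarrow> 'a3) \<Rightarrow> bool" where
  "cat_coequaliser T A B C F1o F1a F2o F2a Eo Ea \<longleftrightarrow>
     is_functor B C Eo Ea \<and>
     functor_eq A (Eo \<circ> F1o) (Ea \<circ> F1a) (Eo \<circ> F2o) (Ea \<circ> F2a) \<and>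
     (\<forall>(X :: ('x, 'y) cat) Ko Ka.
        is_cat X \<longrightarrow> is_functor B X Ko Ka \<longrightarrow>
        functor_eq A (Ko \<circ> F1o) (Ka \<circ> F1a) (Ko \<circ> F2o) (Ka \<circ> F2a) \<longrightarrow>
        (\<exists>Lo La. is_functor C X Lo La \<and> functor_eq B (Lo \<circ> Eo) (La \<circ> Ea) Ko Ka) \<and>
        (\<forall>Lo La Lo' La'.
           is_functor C X Lo La \<longrightarrow> functor_eq B (Lo \<circ> Eo) (La \<circ> Ea) Ko Ka \<longrightarrow>
           is_functor C X Lo' La' \<longrightarrow> functor_eq B (Lo' \<circ> Eo) (La' \<circ> Ea) Ko Ka \<longrightarrow>
           functor_eq C Lo La Lo' La'))"

end

theory Submission
  imports Defs
begin

definition ind2 :: "(nat, nat) cat" where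
  "ind2 = \<lparr>Obj = {0,1}, Arr = {0,1,2,3}, Dom = (\<lambda>f. f div 2), Cod = (\<lambda>f. f mod 2),
           Idn = (\<lambda>x. 3*x), Comp = (\<lambda>g f. 2*(f div 2) + g mod 2)\<rparr>"

lemma ind2_cat: "is_cat ind2"
  unfolding is_cat_def ind2_def by auto

definition indo :: "'o set \<Rightarrow> 'o \<Rightarrow> nat" where
  "indo S x = (if x \<in> S then 1 else 0)"

definition inda :: "('o,'a) cat \<Rightarrow> 'o set \<Rightarrow> 'a \<Rightarrow> nat" where
  "inda C S f = 2 * indo S (Dom C f) + indo S (Cod C f)"

lemma ind2_functor:
  assumes "is_cat C"
  shows "is_functor C ind2 (indo S) (inda C S)"
  using assms unfolding is_functor_def is_cat_def ind2_def inda_def indo_def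
  by (auto split: if_splits)

lemma sat:
  assumes cA: "is_cat A" and cB: "is_cat B"
    and F1: "is_functor A B F1o F1a" and F2: "is_functor A B F2o F2a"
    and coeq: "cat_coequaliser TYPE(nat \<times> nat) A B C F1o F1a F2o F2a Eo Ea"
    and S: "\<forall>a\<in>Obj A. F1o a \<in> S \<longleftrightarrow> F2o a \<in> S"
    and b: "b \<in> Obj B" "b' \<in> Obj B" "Eo b = Eo b'" "b \<in> S"
  shows "b' \<in> S"
proof -
  have K: "is_functor B ind2 (indo S) (inda B S)" by (rule ind2_functor[OF cB])
  have KF: "functor_eq A (indo S \<circ> F1o) (inda B S \<circ> F1a) (indo S \<circ> F2o) (inda B S \<circ> F2a)"
    using F1 F2 S unfolding functor_eq_def is_functor_def inda_def indo_def
    by (auto simp: is_cat_def cA[unfolded is_cat_def])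
  from coeq have "\<exists>Lo La. is_functor C ind2 Lo La \<and> functor_eq B (Lo \<circ> Eo) (La \<circ> Ea) (indo S) (inda B S)"
    unfolding cat_coequaliser_def using ind2_cat K KF by blast
  then obtain Lo La where "functor_eq B (Lo \<circ> Eo) (La \<circ> Ea) (indo S) (inda B S)" by blast
  then have "indo S b = indo S b'" using b unfolding functor_eq_def by (metis comp_apply)
  then show ?thesis using b unfolding indo_def by (auto split: if_splits)
qed

lemma surj_obj:
  assumes cB: "is_cat B" and cC: "is_cat C"
    and coeq: "cat_coequaliser TYPE(nat \<times> nat) A B C F1o F1a F2o F2a Eo Ea"
    and c: "c \<in> Obj C"
  shows "\<exists>b\<in>Obj B. Eo b = c"
proof -
  let ?S = "Obj C - Eo ` Obj B"
  have EF: "is_functor B C Eo Ea" using coeq unfolding cat_coequaliser_def by blast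
  have K: "is_functor B ind2 (indo {}) (inda B {})" by (rule ind2_functor[OF cB])
  have KF: "functor_eq A (indo {} \<circ> F1o) (inda B {} \<circ> F1a) (indo {} \<circ> F2o) (inda B {} \<circ> F2a)"
    unfolding functor_eq_def inda_def indo_def by simp
  have L1: "is_functor C ind2 (indo {}) (inda C {})" by (rule ind2_functor[OF cC])
  have L2: "is_functor C ind2 (indo ?S) (inda C ?S)" by (rule ind2_functor[OF cC])
  have L1E: "functor_eq B (indo {} \<circ> Eo) (inda C {} \<circ> Ea) (indo {}) (inda B {})"
    unfolding functor_eq_def inda_def indo_def by simp
  have L2E: "functor_eq B (indo ?S \<circ> Eo) (inda C ?S \<circ> Ea) (indo {}) (inda B {})"
    using EF cB unfolding functor_eq_def inda_def indo_def is_functor_def is_cat_def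
    by auto
  from coeq have "functor_eq C (indo {}) (inda C {}) (indo ?S) (inda C ?S)"
    unfolding cat_coequaliser_def using ind2_cat K KF L1 L2 L1E L2E by blast
  then have "indo {} c = indo ?S c" using c unfolding functor_eq_def by blast
  then show ?thesis using c unfolding indo_def by (auto split: if_splits)
qed

theorem lemma4p6:
  fixes A :: "('oa, 'aa) cat" and B :: "('ob, 'ab) cat"
    and C :: "('oc, 'ac) cat" and D :: "('od, 'ad) cat"
    and F1o F2o :: "'oa \<Rightarrow> 'ob" and F1a F2a :: "'aa \<Rightarrow> 'ab" and P1 P2 :: "'oa \<Rightarrow> 'ab \<Rightarrow> 'aa"
    and Eo :: "'ob \<Rightarrow> 'oc" and Ea :: "'ab \<Rightarrow> 'ac" and PE :: "'ob \<Rightarrow> 'ac \<Rightarrow> 'ab"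
    and Go :: "'ob \<Rightarrow> 'od" and Ga :: "'ab \<Rightarrow> 'ad" and PG :: "'ob \<Rightarrow> 'ad \<Rightarrow> 'ab"
    and Ho :: "'oc \<Rightarrow> 'od" and Ha :: "'ac \<Rightarrow> 'ad"
  assumes cats: "is_cat A" "is_cat B" "is_cat C" "is_cat D"
    and F1: "is_lens A B F1o F1a P1"
    and F2: "is_lens A B F2o F2a P2"
    and E: "is_lens B C Eo Ea PE"
    and EF: "lens_eq A C (Eo \<circ> F1o) (Ea \<circ> F1a) (lens_comp_put F1o P1 PE)
                         (Eo \<circ> F2o) (Ea \<circ> F2a) (lens_comp_put F2o P2 PE)"
    and coeq_nat: "cat_coequaliser TYPE(nat \<times> nat) A B C F1o F1a F2o F2a Eo Ea"
    and coeq_D: "cat_coequaliser TYPE('od \<times> 'ad) A B C F1o F1a F2o F2a Eo Ea"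
    and G: "is_lens B D Go Ga PG"
    and GF: "lens_eq A D (Go \<circ> F1o) (Ga \<circ> F1a) (lens_comp_put F1o P1 PG)
                         (Go \<circ> F2o) (Ga \<circ> F2a) (lens_comp_put F2o P2 PG)"
    and H: "is_functor C D Ho Ha"
    and HE: "functor_eq B (Ho \<circ> Eo) (Ha \<circ> Ea) Go Ga"
  shows "(\<exists>PH. is_lens C D Ho Ha PH \<and>
            (\<forall>b \<in> Obj B. \<forall>d \<in> Arr D. Dom D d = Go b \<longrightarrow> PH (Eo b) d = Ea (PG b d))) \<and>
         (\<forall>PH PH'.
            is_lens C D Ho Ha PH \<longrightarrow>
            (\<forall>b \<in> Obj B. \<forall>d \<in> Arr D. Dom D d = Go b \<longrightarrow> PH (Eo b) d = Ea (PG b d)) \<longrightarrow>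
            is_lens C D Ho Ha PH' \<longrightarrow>
            (\<forall>b \<in> Obj B. \<forall>d \<in> Arr D. Dom D d = Go b \<longrightarrow> PH' (Eo b) d = Ea (PG b d)) \<longrightarrow>
            (\<forall>c \<in> Obj C. \<forall>d \<in> Arr D. Dom D d = Ho c \<longrightarrow> PH c d = PH' c d))"
proof -
  have F1f: "is_functor A B F1o F1a" and F2f: "is_functor A B F2o F2a"
    using F1 F2 unfolding is_lens_def by blast+
  have Ef: "is_functor B C Eo Ea" using E unfolding is_lens_def by blast
  have Gl: "is_functor B D Go Ga"
    "\<And>x b. x \<in> Obj B \<Longrightarrow> b \<in> Arr D \<Longrightarrow> Dom D b = Go x \<Longrightarrow>
        PG x b \<in> Arr B \<and> Dom B (PG x b) = x \<and> Ga (PG x b) = b"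
    "\<And>x. x \<in> Obj B \<Longrightarrow> PG x (Idn D (Go x)) = Idn B x"
    "\<And>x b b'. x \<in> Obj B \<Longrightarrow> b \<in> Arr D \<Longrightarrow> b' \<in> Arr D \<Longrightarrow>
        Dom D b = Go x \<Longrightarrow> Dom D b' = Go (Cod B (PG x b)) \<Longrightarrow>
        PG x (Comp D b' b) = Comp B (PG (Cod B (PG x b)) b') (PG x b)"
    using G unfolding is_lens_def by blast+
  have EFeq: "\<And>f. f \<in> Arr A \<Longrightarrow> Ea (F1a f) = Ea (F2a f)"
    using coeq_nat unfolding cat_coequaliser_def functor_eq_def by auto
  have GFo: "\<And>a. a \<in> Obj A \<Longrightarrow> Go (F1o a) = Go (F2o a)"
    using GF unfolding lens_eq_def functor_eq_def by auto
  have GFp: "\<And>a d. a \<in> Obj A \<Longrightarrow> d \<in> Arr D \<Longrightarrow> Dom D d = Go (F1o a) \<Longrightarrow>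
      P1 a (PG (F1o a) d) = P2 a (PG (F2o a) d)"
    using GF unfolding lens_eq_def lens_comp_put_def by auto
  have HEo: "\<And>b. b \<in> Obj B \<Longrightarrow> Ho (Eo b) = Go b"
    and HEa: "\<And>f. f \<in> Arr B \<Longrightarrow> Ha (Ea f) = Ga f"
    using HE unfolding functor_eq_def by auto
  have key: "\<And>a d. a \<in> Obj A \<Longrightarrow> d \<in> Arr D \<Longrightarrow> Dom D d = Go (F1o a) \<Longrightarrow>
      Ea (PG (F1o a) d) = Ea (PG (F2o a) d)"
  proof -
    fix a d assume a: "a \<in> Obj A" and d: "d \<in> Arr D" "Dom D d = Go (F1o a)"
    have o1: "F1o a \<in> Obj B" "F2o a \<in> Obj B" using F1f F2f a unfolding is_functor_def by auto
    have p1: "PG (F1o a) d \<in> Arr B" "Dom B (PG (F1o a) d) = F1o a" using Gl(2)[OF o1(1) d] by auto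
    have p2: "PG (F2o a) d \<in> Arr B" "Dom B (PG (F2o a) d) = F2o a"
      using Gl(2)[OF o1(2) d(1)] d(2) GFo[OF a] by auto
    have q1: "P1 a (PG (F1o a) d) \<in> Arr A" "F1a (P1 a (PG (F1o a) d)) = PG (F1o a) d"
      using F1 a p1 unfolding is_lens_def by auto
    have q2: "F2a (P2 a (PG (F2o a) d)) = PG (F2o a) d"
      using F2 a p2 unfolding is_lens_def by auto
    show "Ea (PG (F1o a) d) = Ea (PG (F2o a) d)"
      using EFeq[OF q1(1)] q1(2) q2 GFp[OF a d] by simp
  qed
  have wd: "\<And>b b'. b \<in> Obj B \<Longrightarrow> b' \<in> Obj B \<Longrightarrow> Eo b = Eo b' \<Longrightarrow> d \<in> Arr D \<Longrightarrow> Dom D d = Go b \<Longrightarrow>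
      Ea (PG b' d) = Ea (PG b d)" for d
  proof -
    fix b b' assume b: "b \<in> Obj B" "b' \<in> Obj B" "Eo b = Eo b'" and d: "d \<in> Arr D" "Dom D d = Go b"
    let ?S = "{x. Go x = Go b \<and> Ea (PG x d) = Ea (PG b d)}"
    have S: "\<forall>a\<in>Obj A. F1o a \<in> ?S \<longleftrightarrow> F2o a \<in> ?S"
      using key GFo d by auto
    have "b' \<in> ?S" by (rule sat[OF cats(1,2) F1f F2f coeq_nat S b]) simp
    then show "Ea (PG b' d) = Ea (PG b d)" by simp
  qed
  define rep where "rep c = (SOME b. b \<in> Obj B \<and> Eo b = c)" for c
  have rep: "\<And>c. c \<in> Obj C \<Longrightarrow> rep c \<in> Obj B \<and> Eo (rep c) = c"
    unfolding rep_def using surj_obj[OF cats(2,3) coeq_nat] by (metis (mono_tags, lifting) someI_ex)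
  define PH where "PH c d = Ea (PG (rep c) d)" for c d
  have PHE: "\<And>b d. b \<in> Obj B \<Longrightarrow> d \<in> Arr D \<Longrightarrow> Dom D d = Go b \<Longrightarrow> PH (Eo b) d = Ea (PG b d)"
  proof -
    fix b d assume b: "b \<in> Obj B" and d: "d \<in> Arr D" "Dom D d = Go b"
    have "Eo b \<in> Obj C" using Ef b unfolding is_functor_def by auto
    then have "rep (Eo b) \<in> Obj B" "Eo b = Eo (rep (Eo b))" using rep by auto
    then show "PH (Eo b) d = Ea (PG b d)" unfolding PH_def using wd[OF b _ _ d] by auto
  qed
  have lensH: "is_lens C D Ho Ha PH"
    unfolding is_lens_def
  proof (intro conjI ballI impI)
    show "is_functor C D Ho Ha" by (rule H)
  next
    fix c d assume c: "c \<in> Obj C" and d: "d \<in> Arr D" "Dom D d = Ho c"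
    obtain b where b: "b \<in> Obj B" "Eo b = c" using rep[OF c] by blast
    have d': "Dom D d = Go b" using d b HEo by auto
    have p: "PG b d \<in> Arr B" "Dom B (PG b d) = b" "Ga (PG b d) = d" using Gl(2)[OF b(1) d(1) d'] by auto
    have e: "PH c d = Ea (PG b d)" using PHE[OF b(1) d(1) d'] b by simp
    have r: "PH c d \<in> Arr C \<and> Dom C (PH c d) = c \<and> Ha (PH c d) = d"
      using e p Ef b HEa unfolding is_functor_def by auto
    show "PH c d \<in> Arr C" using r by blast
    show "Dom C (PH c d) = c" using r by blast
    show "Ha (PH c d) = d" using r by blast
  next
    fix c assume c: "c \<in> Obj C"
    obtain b where b: "b \<in> Obj B" "Eo b = c" using rep[OF c] by blast
    have i: "Idn D (Go b) \<in> Arr D" "Dom D (Idn D (Go b)) = Go b"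
      using cats(4) Gl(1) b unfolding is_cat_def is_functor_def by auto
    have "PH c (Idn D (Ho c)) = Ea (PG b (Idn D (Go b)))"
      using PHE[OF b(1) i] b HEo[OF b(1)] by simp
    also have "\<dots> = Ea (Idn B b)" using Gl(3)[OF b(1)] by simp
    also have "\<dots> = Idn C c" using Ef b unfolding is_functor_def by auto
    finally show "PH c (Idn D (Ho c)) = Idn C c" .
  next
    fix c d d' assume c: "c \<in> Obj C" and d: "d \<in> Arr D" "d' \<in> Arr D" "Dom D d = Ho c"
      and d'': "Dom D d' = Ho (Cod C (PH c d))"
    obtain b where b: "b \<in> Obj B" "Eo b = c" using rep[OF c] by blast
    have d': "Dom D d = Go b" using d b HEo by auto
    have p: "PG b d \<in> Arr B" "Dom B (PG b d) = b" "Ga (PG b d) = d" using Gl(2)[OF b(1) d(1) d'] by auto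
    have e: "PH c d = Ea (PG b d)" using PHE[OF b(1) d(1) d'] b by simp
    define b1 where "b1 = Cod B (PG b d)"
    have b1: "b1 \<in> Obj B" using cats(2) p unfolding is_cat_def b1_def by auto
    have cod: "Cod C (PH c d) = Eo b1" using e Ef p unfolding is_functor_def b1_def by auto
    have dd: "Dom D d' = Go b1" using d'' cod HEo b1 by simp
    have p1: "PG b1 d' \<in> Arr B" "Dom B (PG b1 d') = b1" using Gl(2)[OF b1 d(2) dd] by auto
    have cd: "Comp D d' d \<in> Arr D" "Dom D (Comp D d' d) = Go b"
      using cats(4) d(1,2) d' dd p Gl(1) b1 unfolding is_cat_def is_functor_def b1_def
      by (metis (no_types, lifting))+
    have "PH c (Comp D d' d) = Ea (PG b (Comp D d' d))" using PHE[OF b(1) cd] b by simp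
    also have "\<dots> = Ea (Comp B (PG b1 d') (PG b d))"
      using Gl(4)[OF b(1) d(1,2) d'] dd unfolding b1_def by simp
    also have "\<dots> = Comp C (Ea (PG b1 d')) (Ea (PG b d))"
      using Ef p p1 unfolding is_functor_def b1_def by auto
    also have "\<dots> = Comp C (PH (Eo b1) d') (PH c d)" using PHE[OF b1 d(2) dd] e by simp
    finally show "PH c (Comp D d' d) = Comp C (PH (Cod C (PH c d)) d') (PH c d)" using cod by simp
  qed
  show ?thesis
  proof (intro conjI)
    show "\<exists>PH. is_lens C D Ho Ha PH \<and>
            (\<forall>b \<in> Obj B. \<forall>d \<in> Arr D. Dom D d = Go b \<longrightarrow> PH (Eo b) d = Ea (PG b d))"
      using lensH PHE by blast
  next
    show "\<forall>PH PH'.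
            is_lens C D Ho Ha PH \<longrightarrow>
            (\<forall>b \<in> Obj B. \<forall>d \<in> Arr D. Dom D d = Go b \<longrightarrow> PH (Eo b) d = Ea (PG b d)) \<longrightarrow>
            is_lens C D Ho Ha PH' \<longrightarrow>
            (\<forall>b \<in> Obj B. \<forall>d \<in> Arr D. Dom D d = Go b \<longrightarrow> PH' (Eo b) d = Ea (PG b d)) \<longrightarrow>
            (\<forall>c \<in> Obj C. \<forall>d \<in> Arr D. Dom D d = Ho c \<longrightarrow> PH c d = PH' c d)"
    proof (intro allI impI ballI)
      fix Q Q' c d
      assume q: "\<forall>b \<in> Obj B. \<forall>d \<in> Arr D. Dom D d = Go b \<longrightarrow> Q (Eo b) d = Ea (PG b d)"
        and q': "\<forall>b \<in> Obj B. \<forall>d \<in> Arr D. Dom D d = Go b \<longrightarrow> Q' (Eo b) d = Ea (PG b d)"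
        and c: "c \<in> Obj C" and d: "d \<in> Arr D" "Dom D d = Ho c"
      obtain b where b: "b \<in> Obj B" "Eo b = c" using rep[OF c] by blast
      have d': "Dom D d = Go b" using d b HEo by auto
      show "Q c d = Q' c d" using q q' b d d' by metis
    qed
  qed
qed

end
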